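(* Under the same setting, with probability at least $1-(1/2)^d$ the BACON Sketch estimate satisfies $$\hat{E}_{dst} \le E_{dst} + 2m\left(1-e^{-n/(mw)}\right).$$
   Context: BACON Sketch: a $d\times w\times m$ array of bits, organised as $d$ rows, each row consisting of $w$ Bitmap registers of $m$ bits, all initially $0$. It uses a hash function $h_{bm}$ mapping source IPs to $\{0,\dots,m-1\}$ and $d$ pairwise-independent hash functions $h^1_{cm},\dots,h^d_{cm}$ mapping destination IPs to $\{0,\dots,w-1\}$. Update: for each packet with source $src$ and destination $dst$, for each row $i$, the bit with index $h_{bm}(src)$ inside the Bitmap register number $h^i_{cm}(dst)$ of row $i$ is set to $1$. Query: for destination $dst$, $E_i$ is the number of $1$-bits in Bitmap register $h^i_{cm}(dst)$ of row $i$, and $\hat{E}_{dst}=\min_i E_i$. In a time interval, $n$ is the number of distinct source IPs, $E_{dst}$ is the true number of distinct source IPs contacting destination $dst$. Modelling assumptions: hash values uniform and independent across distinct inputs and rows; the expected number of distinct elements from other destinations colliding into the register of $dst$ in a row is $(n-E_{dst})/w$; with $m$ large, the expected number of $1$-bits in a register receiving $k$ distinct sources is $m(1-e^{-k/m})$; the pure Bitmap estimate (without collisions) $\hat{E}^{Bitmap}_{dst}$ satisfies $\hat{E}^{Bitmap}_{dst}\le E_{dst}$. *)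

theory Defs
  imports "HOL-Probability.Probability"
begin

text \<open>Traffic of one time interval: the finite set P of (source, destination) pairs
  observed (duplicate packets are irrelevant for the sketch).\<close>

definition srcs_of :: "('s \<times> 'd) set \<Rightarrow> 'd \<Rightarrow> 's set" where
  "srcs_of P dst = {s. (s, dst) \<in> P}"

definition true_card :: "('s \<times> 'd) set \<Rightarrow> 'd \<Rightarrow> nat" where
  "true_card P dst = card (srcs_of P dst)"

definition num_sources :: "('s \<times> 'd) set \<Rightarrow> nat" where
  "num_sources P = card (fst ` P)"

text \<open>Indices of the 1-bits of the Bitmap register hc(dst) of one row
  (hb = h_bm, hc = h^i_cm of that row), after processing all packets of P.\<close>
definition reg_bits :: "('s \<Rightarrow> nat) \<Rightarrow> ('d \<Rightarrow> nat) \<Rightarrow> ('s \<times> 'd) set \<Rightarrow> 'd \<Rightarrow> nat set" where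
  "reg_bits hb hc P dst = {hb s | s t. (s, t) \<in> P \<and> hc t = hc dst}"

definition row_est :: "('s \<Rightarrow> nat) \<Rightarrow> ('d \<Rightarrow> nat) \<Rightarrow> ('s \<times> 'd) set \<Rightarrow> 'd \<Rightarrow> nat" where
  "row_est hb hc P dst = card (reg_bits hb hc P dst)"

definition bacon_est :: "('s \<Rightarrow> nat) \<Rightarrow> (nat \<Rightarrow> 'd \<Rightarrow> nat) \<Rightarrow> nat \<Rightarrow> ('s \<times> 'd) set \<Rightarrow> 'd \<Rightarrow> nat" where
  "bacon_est hb hcm d P dst = Min {row_est hb (hcm i) P dst | i. i < d}"

definition colliders :: "('d \<Rightarrow> nat) \<Rightarrow> ('s \<times> 'd) set \<Rightarrow> 'd \<Rightarrow> 's set" where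
  "colliders hc P dst = {s. \<exists>t. (s, t) \<in> P \<and> hc t = hc dst} - srcs_of P dst"

definition collision_bits :: "('s \<Rightarrow> nat) \<Rightarrow> ('d \<Rightarrow> nat) \<Rightarrow> ('s \<times> 'd) set \<Rightarrow> 'd \<Rightarrow> nat" where
  "collision_bits hb hc P dst = card (hb ` colliders hc P dst)"

end

theory Submission
  imports Defs
begin

lemma meas_restrict:
  fixes h :: "'w \<Rightarrow> 'x \<Rightarrow> nat" and g :: "('x \<Rightarrow> nat) \<Rightarrow> 'b"
  assumes fin: "finite X" and hm: "\<And>x. x\<in>X \<Longrightarrow> (\<lambda>\<omega>. h \<omega> x) \<in> measurable M (count_space UNIV)"
  shows "(\<lambda>\<omega>. g (restrict (h \<omega>) X)) \<in> measurable M (count_space UNIV)"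
proof -
  have c: "countable (PiE X (\<lambda>_. UNIV::nat set))" by (rule countable_PiE) (auto simp: fin)
  have "(\<lambda>\<omega>. restrict (h \<omega>) X) \<in> measurable M (count_space (PiE X (\<lambda>_. UNIV)))"
    unfolding measurable_count_space_eq_countable[OF c]
  proof (intro conjI ballI)
    show "(\<lambda>\<omega>. restrict (h \<omega>) X) \<in> space M \<rightarrow> X \<rightarrow>\<^sub>E UNIV" by auto
  next
    fix a :: "'x \<Rightarrow> nat" assume a: "a \<in> PiE X (\<lambda>_. UNIV)"
    have eq: "(\<lambda>\<omega>. restrict (h \<omega>) X) -` {a} \<inter> space M = {\<omega>\<in>space M. \<forall>x\<in>X. h \<omega> x = a x}"
      using a by (auto simp: fun_eq_iff restrict_def PiE_def extensional_def)
    have "\<forall>x\<in>X. {\<omega>\<in>space M. h \<omega> x = a x} \<in> sets M"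
      using hm by (auto intro: measurable_sets_Collect)
    have "Measurable.pred M (\<lambda>\<omega>. \<forall>x\<in>X. h \<omega> x = a x)"
      by (rule pred_intros_finite(3)[OF fin]) (rule pred_count_space_const1[OF hm])
    then show "(\<lambda>\<omega>. restrict (h \<omega>) X) -` {a} \<inter> space M \<in> sets M" unfolding eq by (simp add: pred_def)
  qed
  moreover have "g \<in> measurable (count_space (PiE X (\<lambda>_. UNIV))) (count_space UNIV)" by simp
  ultimately show ?thesis by (rule measurable_compose)
qed

lemma reg_bits_cong:
  assumes "\<forall>s\<in>fst`P. hb s = hb' s" "\<forall>t\<in>insert dst (snd`P). hc t = hc' t"
  shows "reg_bits hb hc P dst = reg_bits hb' hc' P dst"
proof -
  have "\<And>s t. (s,t) \<in> P \<Longrightarrow> hb s = hb' s \<and> hc t = hc' t \<and> hc dst = hc' dst"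
    using assms by (force intro: rev_image_eqI)
  then show ?thesis unfolding reg_bits_def by metis
qed

lemma bacon_est_cong:
  assumes "\<forall>s\<in>fst`P. hb s = hb' s" "\<forall>i<d. \<forall>t\<in>insert dst (snd`P). hc i t = hc' i t"
  shows "bacon_est hb hc d P dst = bacon_est hb' hc' d P dst"
proof -
  have "{row_est hb (hc i) P dst | i. i < d} = {row_est hb' (hc' i) P dst | i. i < d}"
  proof -
    have "\<And>i. i < d \<Longrightarrow> row_est hb (hc i) P dst = row_est hb' (hc' i) P dst"
      unfolding row_est_def using reg_bits_cong[OF assms(1)] assms(2) by metis
    then show ?thesis by (auto; metis)
  qed
  then show ?thesis unfolding bacon_est_def by simp
qed

lemma row_le:
  assumes "finite P"
  shows "row_est hb hc P dst \<le> true_card P dst + collision_bits hb hc P dst"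
proof -
  have fs: "finite (srcs_of P dst)"
    by (rule finite_subset[of _ "fst ` P"]) (auto simp: srcs_of_def assms intro: rev_image_eqI)
  have fc: "finite (colliders hc P dst)"
    by (rule finite_subset[of _ "fst ` P"]) (auto simp: colliders_def assms intro: rev_image_eqI)
  have sub: "reg_bits hb hc P dst \<subseteq> hb ` srcs_of P dst \<union> hb ` colliders hc P dst"
    unfolding reg_bits_def srcs_of_def colliders_def by blast
  have "row_est hb hc P dst \<le> card (hb ` srcs_of P dst \<union> hb ` colliders hc P dst)"
    unfolding row_est_def using fs fc by (intro card_mono sub) auto
  also have "\<dots> \<le> card (hb ` srcs_of P dst) + card (hb ` colliders hc P dst)"
    by (rule card_Un_le)
  also have "\<dots> \<le> true_card P dst + collision_bits hb hc P dst"
    unfolding true_card_def collision_bits_def using card_image_le[OF fs, of hb] by simp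
  finally show ?thesis .
qed

lemma bacon_le_row:
  assumes "i < d"
  shows "bacon_est hb hc d P dst \<le> row_est hb (hc i) P dst"
  unfolding bacon_est_def using assms by (intro Min_le) auto

lemma coll_le_m:
  assumes "\<And>s. hb s < m" "finite P"
  shows "collision_bits hb hc P dst \<le> m"
proof -
  have "hb ` colliders hc P dst \<subseteq> {..<m}" using assms by auto
  then show ?thesis unfolding collision_bits_def using card_mono[of "{..<m}"] by fastforce
qed

theorem theorem2:
  fixes M :: "'w measure"
    and hbm :: "'w \<Rightarrow> 's \<Rightarrow> nat"
    and hcm :: "'w \<Rightarrow> nat \<Rightarrow> 'd \<Rightarrow> nat"
    and P :: "('s \<times> 'd) set" and dst :: 'd
    and d m w :: nat
  assumes "prob_space M"
    and "finite P"
    and "d \<ge> 1" and "m \<ge> 1" and "w \<ge> 1"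
    and "\<And>\<omega> s. \<omega> \<in> space M \<Longrightarrow> hbm \<omega> s < m"
    and "\<And>\<omega> i t. \<omega> \<in> space M \<Longrightarrow> i < d \<Longrightarrow> hcm \<omega> i t < w"
    and "\<And>s. (\<lambda>\<omega>. hbm \<omega> s) \<in> measurable M (count_space UNIV)"
    and "\<And>i t. (\<lambda>\<omega>. hcm \<omega> i t) \<in> measurable M (count_space UNIV)"
    \<comment> \<open>modelling assumption: rows independent\<close>
    and "prob_space.indep_vars M (\<lambda>_. borel)
           (\<lambda>i \<omega>. real (collision_bits (hbm \<omega>) (hcm \<omega> i) P dst)) {..<d}"
    \<comment> \<open>modelling assumptions: (n - E_dst)/w expected colliders, each register
        receiving k distinct sources has m(1 - e^(-k/m)) expected 1-bits\<close>
    and "\<And>i. i < d \<Longrightarrow>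
           prob_space.expectation M (\<lambda>\<omega>. real (collision_bits (hbm \<omega>) (hcm \<omega> i) P dst))
           = m * (1 - exp (- ((real (num_sources P) - real (true_card P dst)) / w) / m))"
  shows "prob_space.prob M {\<omega> \<in> space M.
           real (bacon_est (hbm \<omega>) (hcm \<omega>) d P dst)
             \<le> real (true_card P dst) + 2 * m * (1 - exp (- real (num_sources P) / (m * w)))}
         \<ge> 1 - (1/2) ^ d"
  proof -
  interpret prob_space M by fact
  define C where "C = (\<lambda>i \<omega>. real (collision_bits (hbm \<omega>) (hcm \<omega> i) P dst))"
  define E where "E = real (true_card P dst)"
  define n where "n = real (num_sources P)"
  define T where "T = 2 * m * (1 - exp (- n / (m * w)))"
  have ind: "indep_vars (\<lambda>_. borel) C {..<d}" using assms(10) unfolding C_def .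
  have Cm: "\<And>i. i < d \<Longrightarrow> C i \<in> borel_measurable M"
    using ind unfolding indep_vars_def2 by auto
  have EC: "\<And>i. i < d \<Longrightarrow> expectation (C i) = m * (1 - exp (- ((n - E) / w) / m))"
    using assms(11) unfolding C_def n_def E_def by simp
  have pw: "\<And>\<omega> i. i < d \<Longrightarrow> real (bacon_est (hbm \<omega>) (hcm \<omega>) d P dst) \<le> E + C i \<omega>"
  proof -
    fix \<omega> i assume i: "i < d"
    have "bacon_est (hbm \<omega>) (hcm \<omega>) d P dst \<le> true_card P dst + collision_bits (hbm \<omega>) (hcm \<omega> i) P dst"
      by (rule le_trans[OF bacon_le_row[OF i] row_le[OF assms(2)]])
    then show "real (bacon_est (hbm \<omega>) (hcm \<omega>) d P dst) \<le> E + C i \<omega>"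
      unfolding E_def C_def by linarith
  qed
  define h where "h = (\<lambda>\<omega>. case_sum (hbm \<omega>) (\<lambda>(i,t). hcm \<omega> i t))"
  define X where "X = Inl ` fst ` P \<union> Inr ` ({..<d} \<times> insert dst (snd ` P))"
  define G where "G = (\<lambda>r. bacon_est (\<lambda>s. r (Inl s)) (\<lambda>i t. r (Inr (i,t))) d P dst)"
  have finX: "finite X" unfolding X_def using assms(2) by auto
  have hm: "\<And>x. x \<in> X \<Longrightarrow> (\<lambda>\<omega>. h \<omega> x) \<in> measurable M (count_space UNIV)"
  proof -
    fix x :: "'s + nat \<times> 'd"
    show "(\<lambda>\<omega>. h \<omega> x) \<in> measurable M (count_space UNIV)"
    proof (cases x)
      case (Inl s) then show ?thesis unfolding h_def using assms(8) by simp
    next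
      case (Inr p) then show ?thesis unfolding h_def using assms(9) by (cases p) simp
    qed
  qed
  have fG: "\<And>\<omega>. bacon_est (hbm \<omega>) (hcm \<omega>) d P dst = G (restrict (h \<omega>) X)"
    unfolding G_def by (rule bacon_est_cong) (auto simp: X_def h_def)
  have fm: "(\<lambda>\<omega>. bacon_est (hbm \<omega>) (hcm \<omega>) d P dst) \<in> measurable M (count_space UNIV)"
    unfolding fG by (rule meas_restrict[OF finX hm])
  define good where "good = {\<omega> \<in> space M.
           real (bacon_est (hbm \<omega>) (hcm \<omega>) d P dst) \<le> E + T}"
  have good_sets: "good \<in> sets M"
  proof -
    have "(\<lambda>\<omega>. bacon_est (hbm \<omega>) (hcm \<omega>) d P dst) -` {k. real k \<le> E + T} \<inter> space M \<in> sets M"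
      using measurable_sets[OF fm, of "{k. real k \<le> E + T}"] by simp
    moreover have "(\<lambda>\<omega>. bacon_est (hbm \<omega>) (hcm \<omega>) d P dst) -` {k. real k \<le> E + T} \<inter> space M = good"
      unfolding good_def by auto
    ultimately show ?thesis by simp
  qed
  define B where "B = (\<Inter>i\<in>{..<d}. C i -` {T<..} \<inter> space M)"
  have d0: "{..<d} \<noteq> {}" using assms(3) lessThan_empty_iff by (metis not_one_le_zero)
  have B_sets: "B \<in> sets M" unfolding B_def using Cm d0
    by (intro sets.finite_INT) (auto intro: measurable_sets)
  have sub: "space M - B \<subseteq> good"
  proof
    fix \<omega> assume "\<omega> \<in> space M - B"
    then obtain i where i: "i < d" "C i \<omega> \<le> T" "\<omega> \<in> space M" unfolding B_def using d0 by (auto simp: not_less)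
    then show "\<omega> \<in> good" unfolding good_def using pw[OF i(1), of \<omega>] by auto
  qed
  have half: "\<And>i. i < d \<Longrightarrow> prob (C i -` {T<..} \<inter> space M) \<le> 1/2"
  proof -
    fix i assume i: "i < d"
    show "prob (C i -` {T<..} \<inter> space M) \<le> 1/2"
    proof (cases "num_sources P = 0")
      case True
      then have "fst ` P = {}" using assms(2) unfolding num_sources_def by simp
      then have P0: "P = {}" by simp
      have "C i \<omega> = 0" for \<omega> unfolding C_def collision_bits_def colliders_def P0 by simp
      moreover have "T = 0" unfolding T_def n_def True by simp
      ultimately have "C i -` {T<..} \<inter> space M = {}" by auto
      then show ?thesis by simp
    next
      case False
      have mpos: "real m > 0" "real w > 0" using assms(4,5) by auto
      have npos: "n > 0" unfolding n_def using False by simp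
      have "exp (- n / (m * w)) < 1" using npos mpos by simp
      then have Tpos: "T > 0" unfolding T_def using mpos by simp
      have int: "integrable M (C i)"
      proof (rule integrable_const_bound[where B="real m"])
        show "AE x in M. norm (C i x) \<le> real m"
          using coll_le_m[OF assms(6) assms(2)] unfolding C_def by (auto intro!: AE_I2)
      qed (rule Cm[OF i])
      have "prob (C i -` {T<..} \<inter> space M) \<le> prob {x\<in>space M. C i x \<ge> T}"
        using Cm[OF i] by (intro finite_measure_mono) (auto intro: measurable_sets_Collect)
      also have "\<dots> \<le> expectation (C i) / T"
        using int Tpos by (intro integral_Markov_inequality_measure[where A="space M"]) (auto simp: C_def)
      also have "\<dots> \<le> 1/2"
      proof -
        have E0: "E \<ge> 0" unfolding E_def by simp
        have "- n / (m * w) \<le> - ((n - E) / w) / m"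
          using mpos E0 by (simp add: field_simps)
        then have "exp (- n / (m * w)) \<le> exp (- ((n - E) / w) / m)" by simp
        then have "expectation (C i) \<le> T / 2"
          unfolding EC[OF i] T_def using mpos by (simp add: algebra_simps)
        then show ?thesis using Tpos by (simp add: field_simps)
      qed
      finally show ?thesis .
    qed
  qed
  have "prob B = (\<Prod>i\<in>{..<d}. prob (C i -` {T<..} \<inter> space M))"
    unfolding B_def by (rule indep_varsD[OF ind d0]) auto
  also have "\<dots> \<le> (\<Prod>i\<in>{..<d}. 1/2)"
    by (rule prod_mono) (use half in auto)
  also have "\<dots> = (1/2)^d" by simp
  finally have pB: "prob B \<le> (1/2)^d" .
  have "1 - (1/2)^d \<le> prob (space M - B)"
    using prob_compl[OF B_sets] pB by simp
  also have "\<dots> \<le> prob good"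
    by (rule finite_measure_mono[OF sub good_sets])
  finally show ?thesis unfolding good_def T_def E_def n_def by simp
qed

end
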